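(* Let $\lambda,\mu,\lambda',\mu',k,k'\in\mathbb{C}$, $p,p'\in\mathbb{Z}_2$ and $l,l'\in\mathbb{Z}^+$, and write $\delta=\mu-\lambda$, $\delta'=\mu'-\lambda'$. If the $\mathcal{K}$-modules $\mathrm{SQ}^{k,p,l}_{\lambda,\mu}$ and $\mathrm{SQ}^{k',p',l'}_{\lambda',\mu'}$ are equivalent, then $l=l'$, $\delta-k=\delta'-k'$, and the parity of the equivalence is $p-p'$ (even if $p=p'$, odd otherwise). There are no equivalences of mixed parity between such modules.
   Context: Work over $\mathbb{C}$ on the superline $\mathbb{R}^{1|1}$ in the polynomial category. Let $\mathbb{C}[x,\xi]$ be the polynomial superalgebra with even coordinate $x$ and odd coordinate $\xi$ ($\xi^2=0$), and set $D=\partial_\xi+\xi\partial_x$, $\bar D=\partial_\xi-\xi\partial_x$. For $F\in\mathbb{C}[x,\xi]$ put $X_F=F\partial_x+\tfrac12 D(F)\bar D$; the Lie superalgebra of contact vector fields is $\mathcal{K}=\{X_F:F\in\mathbb{C}[x,\xi]\}$. For a superspace $V$, $V^\Pi$ is $V$ with parity reversed, and $V^{p\Pi}$ is $V$ if $p$ is even and $V^\Pi$ if $p$ is odd. For $\nu\in\mathbb{C}$ the tensor density module is $\mathcal{F}_\nu=\alpha^\nu\mathbb{C}[x,\xi]$ ($\alpha^\nu$ a formal even symbol) with action $L_\nu(X_F)(\alpha^\nu G)=\alpha^\nu(X_F(G)+\nu\,\partial_x(F)\,G)$. For $\lambda,\mu\in\mathbb{C}$ write $\delta=\mu-\lambda$.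 For $z\in\mathbb{C}$ define formal symbols $\bar D^z_0=e^{i\pi z/2}\partial_x^{z/2}$ (even) and $\bar D^z_1=e^{i\pi(z-1)/2}\partial_x^{(z-1)/2}\bar D$ (odd). For $k\in\mathbb{C}$, $p\in\mathbb{Z}_2$, the space of pseudodifferential operators is $\Psi^{k,p}_{\lambda,\mu}=\{\alpha^{\delta}\sum_{j\in\mathbb{N}}T_{2k-j}\bar D^{2k-j}_{p+(j\bmod 2)}:T_{2k-j}\in\mathbb{C}[x,\xi]\}$ (formal series). Composition is defined by $\bar D^{z'}_{p'}\circ\bar D^z_p=\bar D^{z+z'}_{p+p'}$, $[\bar D,\partial_x^z]=0$ and the generalized Leibniz rule $\partial_x^z\circ F=\sum_{j\in\mathbb{N}}\binom{z}{j}\partial_x^j(F)\circ\partial_x^{z-j}$, and $\mathcal{K}$ acts by $L_{\lambda,\mu}(X)(T)=L_\mu(X)\circ T-(-1)^{|X||T|}T\circ L_\lambda(X)$; the spaces $\Psi^{k-1/2,p+1}_{\lambda,\mu}\subset\Psi^{k,p}_{\lambda,\mu}$ are $\mathcal{K}$-submodules. For $l\in\mathbb{Z}^+$, $\mathrm{SQ}^{k,p,l}_{\lambda,\mu}=\Psi^{k,p}_{\lambda,\mu}/\Psi^{k-l/2,\,p+l}_{\lambda,\mu}$, a $\mathcal{K}$-module with successive composition factors $\mathcal{F}^{p\Pi}_{\delta-k},\mathcal{F}^{(p+1)\Pi}_{\delta-k+1/2},\dots,\mathcal{F}^{(p+l-1)\Pi}_{\delta-k+(l-1)/2}$. Equivalences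 are $\mathcal{K}$-module isomorphisms, which may be even, odd or of mixed parity. *)

theory Defs
  imports "HOL-Computational_Algebra.Polynomial" "HOL-Library.Z2" "HOL-Library.Product_Plus"
begin

text \<open>An element a(x) + xi b(x) of C[x,xi] is represented by the pair (a, b).
  Its even part is a, its odd part is xi b.\<close>

type_synonym spoly = "complex poly \<times> complex poly"

definition sp_scale :: "complex \<Rightarrow> spoly \<Rightarrow> spoly" where
  "sp_scale c F = (smult c (fst F), smult c (snd F))"

definition sp_mult :: "spoly \<Rightarrow> spoly \<Rightarrow> spoly" where
  "sp_mult F G = (fst F * fst G, fst F * snd G + snd F * fst G)"

definition sp_dx :: "spoly \<Rightarrow> spoly" where
  "sp_dx F = (pderiv (fst F), pderiv (snd F))"

text \<open>D = partial_xi + xi partial_x\<close>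
definition sp_D :: "spoly \<Rightarrow> spoly" where
  "sp_D F = (snd F, pderiv (fst F))"

text \<open>Dbar = partial_xi - xi partial_x\<close>
definition sp_Dbar :: "spoly \<Rightarrow> spoly" where
  "sp_Dbar F = (snd F, - pderiv (fst F))"

text \<open>parity automorphism: F \<mapsto> (-1)^|F| F on homogeneous F\<close>
definition sp_sigma :: "spoly \<Rightarrow> spoly" where
  "sp_sigma F = (fst F, - snd F)"

definition sp_even_part :: "spoly \<Rightarrow> spoly" where
  "sp_even_part F = (fst F, 0)"

definition sp_odd_part :: "spoly \<Rightarrow> spoly" where
  "sp_odd_part F = (0, snd F)"

text \<open>A symbol (z, q, c) stands for the formal series
  sum_n  c n \<circ> Dbar^(z - n)_(q + n).\<close>

type_synonym symb = "complex \<times> bit \<times> (nat \<Rightarrow> spoly)"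

text \<open>Commutation rule: Dbar^z_q \<circ> G = sum_d (comm_coeff d z q G) \<circ> Dbar^(z-d)_(q+d).
  Derived from Dbar^z_0 = e^(i pi z/2) partial_x^(z/2), the generalized Leibniz rule,
  Dbar^z_1 = Dbar^(z-1)_0 \<circ> Dbar and Dbar \<circ> G = Dbar(G) + sigma(G) Dbar.\<close>
definition comm_coeff :: "nat \<Rightarrow> complex \<Rightarrow> bit \<Rightarrow> spoly \<Rightarrow> spoly" where
  "comm_coeff d z q G =
     (if q = 0 then
        (if even d then sp_scale ((-1) ^ (d div 2) * ((z / 2) gchoose (d div 2)))
                                  ((sp_dx ^^ (d div 2)) G)
         else (0, 0))
      else
        (if even d then sp_scale ((-1) ^ (d div 2) * (((z - 1) / 2) gchoose (d div 2)))
                                  ((sp_dx ^^ (d div 2)) (sp_sigma G))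
         else sp_scale ((-1) ^ (d div 2) * (((z - 1) / 2) gchoose (d div 2)))
                                  ((sp_dx ^^ (d div 2)) (sp_Dbar G))))"

text \<open>Composition of symbols, using Dbar^z'_p' \<circ> Dbar^z_p = Dbar^(z+z')_(p+p').\<close>
definition symb_comp :: "symb \<Rightarrow> symb \<Rightarrow> symb" where
  "symb_comp A B =
     (case A of (z0, q0, a) \<Rightarrow> case B of (w0, r0, b) \<Rightarrow>
       (z0 + w0, q0 + r0,
        \<lambda>n. \<Sum>i\<le>n. \<Sum>d\<le>n - i.
              sp_mult (a i) (comm_coeff d (z0 - of_nat i) (q0 + of_nat i) (b (n - i - d)))))"

definition symb_coeff :: "symb \<Rightarrow> nat \<Rightarrow> spoly" where
  "symb_coeff A n = snd (snd A) n"

text \<open>The operator L_nu(X_F) = F partial_x + 1/2 D(F) Dbar + nu F' as a symbol,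
  using partial_x = - Dbar^2_0, Dbar = Dbar^1_1, 1 = Dbar^0_0.\<close>
definition L_symb :: "complex \<Rightarrow> spoly \<Rightarrow> symb" where
  "L_symb nu F = (2, 0, \<lambda>n. if n = 0 then - F
                            else if n = 1 then sp_scale (1/2) (sp_D F)
                            else if n = 2 then sp_scale nu (sp_dx F)
                            else 0)"

text \<open>An element of Psi^{k,p}_{lambda,mu} is alpha^delta sum_j T_j Dbar^(2k-j)_(p+j);
  we store j \<mapsto> T_j.  An element of the quotient SQ^{k,p,l} is represented by its
  canonical representative with T_j = 0 for j \<ge> l.\<close>

definition SQ_carrier :: "nat \<Rightarrow> (nat \<Rightarrow> spoly) set" where
  "SQ_carrier l = {T. \<forall>j\<ge>l. T j = 0}"

text \<open>even / odd homogeneous parts: in T_j Dbar^(2k-j)_(p+j), the even part of T_j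
  has parity p+j, the odd part has parity p+j+1.\<close>
definition SQ_even_part :: "bit \<Rightarrow> (nat \<Rightarrow> spoly) \<Rightarrow> (nat \<Rightarrow> spoly)" where
  "SQ_even_part p T = (\<lambda>j. if p + of_nat j = 0 then sp_even_part (T j) else sp_odd_part (T j))"

definition SQ_odd_part :: "bit \<Rightarrow> (nat \<Rightarrow> spoly) \<Rightarrow> (nat \<Rightarrow> spoly)" where
  "SQ_odd_part p T = (\<lambda>j. if p + of_nat j = 0 then sp_odd_part (T j) else sp_even_part (T j))"

definition SQ_is_even :: "bit \<Rightarrow> (nat \<Rightarrow> spoly) \<Rightarrow> bool" where
  "SQ_is_even p T \<longleftrightarrow> SQ_odd_part p T = (\<lambda>_. 0)"

definition SQ_is_odd :: "bit \<Rightarrow> (nat \<Rightarrow> spoly) \<Rightarrow> bool" where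
  "SQ_is_odd p T \<longleftrightarrow> SQ_even_part p T = (\<lambda>_. 0)"

text \<open>Super-bracket L_mu(X) \<circ> T - (-1)^{|X||T|} T \<circ> L_lambda(X) for homogeneous
  F (parity fo) and T (parity to); coefficients indexed from degree 2k+2.\<close>
definition hom_bracket ::
  "complex \<Rightarrow> complex \<Rightarrow> complex \<Rightarrow> bit \<Rightarrow> spoly \<Rightarrow> bool \<Rightarrow> (nat \<Rightarrow> spoly) \<Rightarrow> bool \<Rightarrow> nat \<Rightarrow> spoly"
  where
  "hom_bracket lam mu k p F fo T to n =
     symb_coeff (symb_comp (L_symb mu F) (2 * k, p, T)) n
     - sp_scale (if fo \<and> to then -1 else 1) (symb_coeff (symb_comp (2 * k, p, T) (L_symb lam F)) n)"

text \<open>The action L_{lambda,mu}(X_F) on SQ^{k,p,l}_{lambda,mu} (extended bilinearly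
  from homogeneous parts; the terms of degree 2k+2, 2k+1 cancel).\<close>
definition SQ_act ::
  "complex \<Rightarrow> complex \<Rightarrow> complex \<Rightarrow> bit \<Rightarrow> nat \<Rightarrow> spoly \<Rightarrow> (nat \<Rightarrow> spoly) \<Rightarrow> (nat \<Rightarrow> spoly)"
  where
  "SQ_act lam mu k p l F T = (\<lambda>j. if j < l then
      hom_bracket lam mu k p (sp_even_part F) False (SQ_even_part p T) False (j + 2)
    + hom_bracket lam mu k p (sp_even_part F) False (SQ_odd_part p T) True (j + 2)
    + hom_bracket lam mu k p (sp_odd_part F) True (SQ_even_part p T) False (j + 2)
    + hom_bracket lam mu k p (sp_odd_part F) True (SQ_odd_part p T) True (j + 2)
    else 0)"

text \<open>A K-module isomorphism SQ^{k,p,l}_{lam,mu} \<rightarrow> SQ^{k',p',l'}_{lam',mu'}: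
  a C-linear bijection commuting with the action of every X_F (no parity
  condition is imposed: it may be even, odd or of mixed parity).\<close>
definition SQ_equivalence ::
  "complex \<Rightarrow> complex \<Rightarrow> complex \<Rightarrow> bit \<Rightarrow> nat \<Rightarrow>
   complex \<Rightarrow> complex \<Rightarrow> complex \<Rightarrow> bit \<Rightarrow> nat \<Rightarrow>
   ((nat \<Rightarrow> spoly) \<Rightarrow> (nat \<Rightarrow> spoly)) \<Rightarrow> bool" where
  "SQ_equivalence lam mu k p l lam' mu' k' p' l' \<Phi> \<longleftrightarrow>
     bij_betw \<Phi> (SQ_carrier l) (SQ_carrier l') \<and>
     (\<forall>c u v. u \<in> SQ_carrier l \<longrightarrow> v \<in> SQ_carrier l \<longrightarrow>
        \<Phi> (\<lambda>j. sp_scale c (u j) + v j) = (\<lambda>j. sp_scale c (\<Phi> u j) + \<Phi> v j)) \<and>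
     (\<forall>F u. u \<in> SQ_carrier l \<longrightarrow>
        \<Phi> (SQ_act lam mu k p l F u) = SQ_act lam' mu' k' p' l' F (\<Phi> u))"

definition SQ_map_even :: "bit \<Rightarrow> nat \<Rightarrow> bit \<Rightarrow> ((nat \<Rightarrow> spoly) \<Rightarrow> (nat \<Rightarrow> spoly)) \<Rightarrow> bool" where
  "SQ_map_even p l p' \<Phi> \<longleftrightarrow>
     (\<forall>u \<in> SQ_carrier l. (SQ_is_even p u \<longrightarrow> SQ_is_even p' (\<Phi> u)) \<and>
                          (SQ_is_odd p u \<longrightarrow> SQ_is_odd p' (\<Phi> u)))"

definition SQ_map_odd :: "bit \<Rightarrow> nat \<Rightarrow> bit \<Rightarrow> ((nat \<Rightarrow> spoly) \<Rightarrow> (nat \<Rightarrow> spoly)) \<Rightarrow> bool" where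
  "SQ_map_odd p l p' \<Phi> \<longleftrightarrow>
     (\<forall>u \<in> SQ_carrier l. (SQ_is_even p u \<longrightarrow> SQ_is_odd p' (\<Phi> u)) \<and>
                          (SQ_is_odd p u \<longrightarrow> SQ_is_even p' (\<Phi> u)))"

end

theory Submission
  imports Defs
begin


lemma of_nat_bit: "(of_nat n :: bit) = (if even n then 0 else 1)"
  by (induction n) auto

lemma comm0: "comm_coeff 0 z q G = (if q = 0 then G else sp_sigma G)"
  by (simp add: comm_coeff_def sp_scale_def)

lemma comm1: "comm_coeff 1 z q G = (if q = 0 then 0 else sp_Dbar G)"
  by (simp add: comm_coeff_def sp_scale_def zero_prod_def)

lemma comm2: "comm_coeff 2 z q G = (if q = 0 then sp_scale (-(z/2)) (sp_dx G)
     else sp_scale (-((z-1)/2)) (sp_dx (sp_sigma G)))"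
proof -
  have e: "-((z-1)/2) = (1 - z)/(2::complex)" by (simp add: field_simps)
  show ?thesis unfolding e by (simp add: comm_coeff_def)
qed

lemma comm_zero_gch:
  assumes "q = 0 \<Longrightarrow> even d \<Longrightarrow> (z/2) gchoose (d div 2) = 0"
    and "q \<noteq> 0 \<Longrightarrow> ((z-1)/2) gchoose (d div 2) = 0"
  shows "comm_coeff d z q G = 0"
  using assms by (auto simp: comm_coeff_def sp_scale_def zero_prod_def)

lemma dx_sigma_pow: "(sp_dx ^^ h) (sp_sigma G) = sp_sigma ((sp_dx ^^ h) G)"
  by (induction h) (auto simp: sp_dx_def sp_sigma_def pderiv_minus)

lemma dx_pow_zero: "(sp_dx ^^ h) 0 = 0"
  by (induction h) (auto simp: sp_dx_def zero_prod_def)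

lemma fst_sigma[simp]: "fst (sp_sigma G) = fst G" by (simp add: sp_sigma_def)
lemma snd_sigma[simp]: "snd (sp_sigma G) = - snd G" by (simp add: sp_sigma_def)

lemma sigma_zero: "sp_sigma 0 = 0" by (simp add: sp_sigma_def zero_prod_def)

lemma comm_zero_dx:
  assumes "(sp_dx ^^ (d div 2)) G = 0" "(sp_dx ^^ (d div 2)) (sp_Dbar G) = 0"
  shows "comm_coeff d z q G = 0"
  using assms by (auto simp: comm_coeff_def sp_scale_def dx_sigma_pow prod_eq_iff)

lemma dx_pow_ge1: "sp_dx G = 0 \<Longrightarrow> h \<ge> 1 \<Longrightarrow> (sp_dx ^^ h) G = 0"
  by (cases h) (auto simp: funpow_Suc_right dx_pow_zero simp del: funpow.simps)

lemma dx_pow_ge2: "sp_dx (sp_dx G) = 0 \<Longrightarrow> h \<ge> 2 \<Longrightarrow> (sp_dx ^^ h) G = 0"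
  apply (cases h, simp)
  subgoal for h' by (cases h') (auto simp: funpow_Suc_right dx_pow_zero simp del: funpow.simps)
  done

lemma gch_one: "h \<ge> 2 \<Longrightarrow> (1::complex) gchoose h = 0"
  using binomial_gbinomial[of 1 h, where 'a=complex] by (simp add: binomial_eq_0)

lemma gch_zero: "h \<ge> 1 \<Longrightarrow> (0::complex) gchoose h = 0"
  by (simp add: gbinomial_0_left)

lemma sum_pairs:
  fixes n :: nat
  assumes "S \<subseteq> Sigma {..n} (\<lambda>i. {..n-i})"
    and "\<And>i d. i + d \<le> n \<Longrightarrow> (i,d) \<notin> S \<Longrightarrow> f i d = 0"
  shows "(\<Sum>i\<le>n. \<Sum>d\<le>n-i. f i d) = (\<Sum>(i,d)\<in>S. f i d)"
proof -
  have "(\<Sum>i\<le>n. \<Sum>d\<le>n-i. f i d) = (\<Sum>(i,d)\<in>Sigma {..n} (\<lambda>i. {..n-i}). f i d)"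
    proof (rule sum.Sigma)
    show "finite {..n}" by simp
    show "\<forall>x\<in>{..n}. finite {..n - x}" by simp
  qed
  also have "\<dots> = (\<Sum>(i,d)\<in>S. f i d)"
    by (rule sum.mono_neutral_right) (use assms in auto)
  finally show ?thesis .
qed


lemma comm_zero_dx2:
  assumes "if even d then (sp_dx ^^ (d div 2)) G = 0 else (sp_dx ^^ (d div 2)) (sp_Dbar G) = 0"
  shows "comm_coeff d z q G = 0"
  using assms by (auto simp: comm_coeff_def sp_scale_def dx_sigma_pow prod_eq_iff split: if_splits)

lemma sp_mult_0l[simp]: "sp_mult 0 G = 0" by (simp add: sp_mult_def zero_prod_def)
lemma sp_mult_0r[simp]: "sp_mult G 0 = 0" by (simp add: sp_mult_def zero_prod_def)
lemma sp_Dbar_0[simp]: "sp_Dbar 0 = 0" by (simp add: sp_Dbar_def zero_prod_def)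

lemma LT_coeff:
  "symb_coeff (symb_comp (L_symb mu (f,0)) (2*k, p, T)) (j+2) =
    sp_mult (-(f,0)) (T (j+2)) + sp_mult (-(f,0)) (sp_scale (-1) (sp_dx (T j)))
    + sp_mult (sp_scale (1/2) (sp_D (f,0))) (sp_sigma (T (j+1)))
    + sp_mult (sp_scale (1/2) (sp_D (f,0))) (sp_Dbar (T j))
    + sp_mult (sp_scale mu (sp_dx (f,0))) (T j)"
  unfolding symb_coeff_def symb_comp_def L_symb_def
  apply (simp only: prod.case fst_conv snd_conv)
  apply (subst sum_pairs[where S="{(0,0),(0,2),(1,0),(1,1),(2,0)}"])
  subgoal by auto
  subgoal for i d
  proof -
    assume a: "i + d \<le> j+2" "(i,d) \<notin> {(0,0),(0,2),(1,0),(1,1),(2,0)}"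
    consider "i \<ge> 3" | "i = 0" | "i = 1" | "i = 2" by arith
    then show ?thesis
    proof cases
      case 1 then show ?thesis by simp
    next
      case 2
      have "comm_coeff d (2 - of_nat i) (0 + of_nat i) (T (j + 2 - i - d)) = 0"
        by (rule comm_zero_gch) (use 2 a in \<open>auto simp: gch_one\<close>)
      then show ?thesis by simp
    next
      case 3
      have "comm_coeff d (2 - of_nat i) (0 + of_nat i) (T (j + 2 - i - d)) = 0"
        by (rule comm_zero_gch) (use 3 a in \<open>auto simp: gch_zero\<close>)
      then show ?thesis by simp
    next
      case 4
      have "comm_coeff d (2 - of_nat i) (0 + of_nat i) (T (j + 2 - i - d)) = 0"
        by (rule comm_zero_gch) (use 4 a in \<open>auto simp: gch_zero\<close>)
      then show ?thesis by simp
    qed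
  qed
  apply (simp add: comm0 comm1 comm2 comm1[simplified])
  done

lemma G2a: "pderiv (pderiv f) = 0 \<Longrightarrow> sp_dx (sp_scale lam (sp_dx (f,0))) = 0"
  by (simp add: sp_dx_def sp_scale_def pderiv_smult zero_prod_def)
lemma G2b: "pderiv (pderiv f) = 0 \<Longrightarrow> sp_Dbar (sp_scale lam (sp_dx (f,0))) = 0"
  by (simp add: sp_dx_def sp_Dbar_def sp_scale_def pderiv_smult zero_prod_def)
lemma G1a: "pderiv (pderiv f) = 0 \<Longrightarrow> sp_dx (sp_scale c (sp_D (f,0))) = 0"
  by (simp add: sp_dx_def sp_D_def sp_scale_def pderiv_smult zero_prod_def)
lemma G1b: "pderiv (pderiv f) = 0 \<Longrightarrow> sp_dx (sp_Dbar (sp_scale c (sp_D (f,0)))) = 0"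
  by (simp add: sp_dx_def sp_D_def sp_Dbar_def sp_scale_def pderiv_smult zero_prod_def)
lemma G0a: "pderiv (pderiv f) = 0 \<Longrightarrow> sp_dx (sp_dx (- (f,0))) = 0"
  by (simp add: sp_dx_def pderiv_minus zero_prod_def)
lemma G0b: "pderiv (pderiv f) = 0 \<Longrightarrow> sp_dx (sp_Dbar (- (f,0))) = 0"
  by (simp add: sp_dx_def sp_Dbar_def pderiv_minus zero_prod_def)

lemma T1: fixes i d j :: nat assumes a: "i + d \<le> j+2" "(i,d) \<notin> {(j+2,0),(j+1,1),(j,2),(j+1,0),(j,1),(j,0)}"
  shows "j + 2 - i - d \<ge> 3 \<or> (j + 2 - i - d = 2 \<and> d \<ge> 1) \<or> (j + 2 - i - d = 1 \<and> d \<ge> 2) \<or> (j + 2 - i - d = 0 \<and> d \<ge> 3)"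
proof -
    have b: "\<not> (i = j+2 \<and> d = 0)" "\<not> (i = j+1 \<and> d = 1)" "\<not> (i = j \<and> d = 2)"
      "\<not> (i = j+1 \<and> d = 0)" "\<not> (i = j \<and> d = 1)" "\<not> (i = j \<and> d = 0)"
      using a(2) by blast+
    have "j + 2 - i - d \<ge> 3 \<or> j + 2 - i - d = 2 \<or> j + 2 - i - d = 1 \<or> j + 2 - i - d = 0" by arith
    then show ?thesis
    proof (elim disjE)
      assume "j + 2 - i - d = 2" then have "i + d = j" using a(1) by arith
      then show ?thesis using b(6) \<open>j + 2 - i - d = 2\<close> by (cases d) auto
    next
      assume h: "j + 2 - i - d = 1" then have "i + d = j + 1" using a(1) by arith
      then show ?thesis using b(4,5) h by (cases d; cases "d - 1") auto
    next
      assume h: "j + 2 - i - d = 0" then have "i + d = j + 2" using a(1) by arith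
      then show ?thesis using b(1,2,3) h by (cases d; cases "d - 1"; cases "d - 2") auto
    qed simp
qed

lemma T2:
  fixes m d :: nat
  assumes "pderiv (pderiv f) = 0"
    and "m \<ge> 3 \<or> (m = 2 \<and> d \<ge> 1) \<or> (m = 1 \<and> d \<ge> 2) \<or> (m = 0 \<and> d \<ge> 3)"
  shows "comm_coeff d z q
       (if m = 0 then - (f,0) else if m = 1 then sp_scale (1/2) (sp_D (f,0))
        else if m = 2 then sp_scale lam (sp_dx (f,0)) else 0) = 0"
proof -
  consider "m \<ge> 3" | "m = 2" "d \<ge> 1" | "m = 1" "d \<ge> 2" | "m = 0" "d \<ge> 3"
    using assms(2) by blast
  then show ?thesis
  proof cases
      case 1 then show ?thesis
      by (intro comm_zero_dx2) (simp add: dx_pow_zero)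
    next
    case 2
    have "(sp_dx ^^ (d div 2)) (sp_scale lam (sp_dx (f,0))) = 0" if "even d"
      using that 2 G2a[OF assms(1)] by (intro dx_pow_ge1) auto
    moreover have "(sp_dx ^^ (d div 2)) (sp_Dbar (sp_scale lam (sp_dx (f,0)))) = 0"
      by (simp add: G2b[OF assms(1)] dx_pow_zero)
    ultimately show ?thesis using 2
      by (intro comm_zero_dx2) simp
    next
    case 3
    have "(sp_dx ^^ (d div 2)) (sp_scale (1/2) (sp_D (f,0))) = 0"
      using 3 G1a[OF assms(1)] by (intro dx_pow_ge1) auto
    moreover have "(sp_dx ^^ (d div 2)) (sp_Dbar (sp_scale (1/2) (sp_D (f,0)))) = 0"
      using 3 G1b[OF assms(1)] by (intro dx_pow_ge1) auto
    ultimately show ?thesis using 3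
      by (intro comm_zero_dx2) simp
    next
    case 4
    have "(sp_dx ^^ (d div 2)) (- (f,0)) = 0" if "even d"
      using that 4 G0a[OF assms(1)] by (intro dx_pow_ge2) auto
    moreover have "(sp_dx ^^ (d div 2)) (sp_Dbar (- (f,0))) = 0"
      using 4 G0b[OF assms(1)] by (intro dx_pow_ge1) auto
    ultimately show ?thesis using 4
      by (intro comm_zero_dx2) simp
  qed
qed




lemma TL_coeff:
  assumes "pderiv (pderiv f) = 0"
  shows "symb_coeff (symb_comp (2*k, p, T) (L_symb lam (f,0))) (j+2) =
    sp_mult (T (j+2)) (comm_coeff 0 (2*k - of_nat (j+2)) (p + of_nat (j+2)) (-(f,0)))
  + sp_mult (T (j+1)) (comm_coeff 1 (2*k - of_nat (j+1)) (p + of_nat (j+1)) (-(f,0)))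
  + sp_mult (T j) (comm_coeff 2 (2*k - of_nat j) (p + of_nat j) (-(f,0)))
  + sp_mult (T (j+1)) (comm_coeff 0 (2*k - of_nat (j+1)) (p + of_nat (j+1)) (sp_scale (1/2) (sp_D (f,0))))
  + sp_mult (T j) (comm_coeff 1 (2*k - of_nat j) (p + of_nat j) (sp_scale (1/2) (sp_D (f,0))))
  + sp_mult (T j) (comm_coeff 0 (2*k - of_nat j) (p + of_nat j) (sp_scale lam (sp_dx (f,0))))"
  unfolding symb_coeff_def symb_comp_def L_symb_def
  apply (simp only: prod.case fst_conv snd_conv)
  apply (subst sum_pairs[where S="{(j+2,0),(j+1,1),(j,2),(j+1,0),(j,1),(j,0)}"])
  subgoal by auto
  subgoal premises prems for i d
    by (simp only: T2[OF assms T1[OF prems]] sp_mult_0r)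
  by simp


lemma half_two: "smult (1/2) (a * (2 * b)) = (a * b :: complex poly)"
proof -
  have "smult (1/2) (a * (2 * b)) = smult (1/2) (a * b) + smult (1/2) (a * b)"
    by (simp only: mult_2 distrib_left smult_add_right)
  also have "\<dots> = smult (1/2 + 1/2) (a * b)" by (simp only: smult_add_left)
  finally show ?thesis by simp
qed

lemma hb_formula:
  assumes "pderiv (pderiv f) = 0"
  shows "hom_bracket lam mu k p (f, 0) False T to (j+2) =
    (f * pderiv (fst (T j)) + smult (mu - lam - k + of_nat j / 2) (pderiv f * fst (T j)),
     f * pderiv (snd (T j)) + smult (mu - lam - k + (of_nat j + 1) / 2) (pderiv f * snd (T j)))"
proof -
  have bq: "p + of_nat j = 0 \<or> p + of_nat j = (1::bit)" by (cases "p + of_nat j") auto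
  have s1: "p + of_nat (j+1) = p + of_nat j + (1::bit)" by (simp add: add.assoc)
  have s2: "p + of_nat (j+2) = p + (of_nat j::bit)" by (simp add: add.assoc)
  show ?thesis
    unfolding hom_bracket_def LT_coeff TL_coeff[OF assms] s1 s2
    using bq
    apply (elim disjE)
    apply (simp_all add: comm0 comm1 comm2 comm1[simplified] sp_mult_def sp_scale_def sp_D_def sp_Dbar_def sp_dx_def prod_eq_iff)
    apply (simp_all add: pderiv_minus algebra_simps smult_add_left smult_diff_left diff_divide_distrib add_divide_distrib)
    apply (simp add: half_two)
    done
qed

lemma comm_of_zero: "comm_coeff d z q 0 = 0"
  by (rule comm_zero_dx2) (simp add: dx_pow_zero)

lemma L_symb_zero: "L_symb nu (0,0) = (2, 0, \<lambda>n. 0)"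
  by (auto simp: L_symb_def sp_scale_def sp_D_def sp_dx_def zero_prod_def)

lemma hb_zeroF: "hom_bracket lam mu k p (0,0) fo T to n = 0"
proof -
  have "sp_scale c (0::spoly) = 0" for c by (simp add: sp_scale_def zero_prod_def)
  then show ?thesis
    by (simp add: hom_bracket_def L_symb_zero symb_comp_def symb_coeff_def comm_of_zero)
qed

definition ev_diag :: "complex poly \<Rightarrow> complex \<Rightarrow> nat \<Rightarrow> spoly \<Rightarrow> spoly" where
  "ev_diag f nu j G = (f * pderiv (fst G) + smult (nu + of_nat j / 2) (pderiv f * fst G),
     f * pderiv (snd G) + smult (nu + (of_nat j + 1) / 2) (pderiv f * snd G))"

lemma act_formula:
  assumes "pderiv (pderiv f) = 0"
  shows "SQ_act lam mu k p l (f,0) T = (\<lambda>j. if j < l then ev_diag f (mu - lam - k) j (T j) else 0)"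
proof
  fix j
  have e: "sp_even_part (f,0) = (f,0)" "sp_odd_part (f,0) = (0,0)"
    by (simp_all add: sp_even_part_def sp_odd_part_def)
  show "SQ_act lam mu k p l (f,0) T j = (if j < l then ev_diag f (mu - lam - k) j (T j) else 0)"
    unfolding SQ_act_def e hb_zeroF hb_formula[OF assms]
    by (simp add: SQ_even_part_def SQ_odd_part_def sp_even_part_def sp_odd_part_def ev_diag_def
        prod_eq_iff algebra_simps smult_add_right of_nat_bit)
qed


definition sel :: "bool \<Rightarrow> spoly \<Rightarrow> complex poly" where
  "sel e G = (if e then snd G else fst G)"

definition cf :: "(nat \<Rightarrow> spoly) \<Rightarrow> nat \<Rightarrow> bool \<Rightarrow> nat \<Rightarrow> complex" where
  "cf u j e n = coeff (sel e (u j)) n"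

definition eig :: "complex \<Rightarrow> nat \<Rightarrow> bool \<Rightarrow> nat \<Rightarrow> complex" where
  "eig nu j e n = nu + (of_nat j + of_bool e) / 2 + of_nat n"

definition Eop :: "complex \<Rightarrow> complex \<Rightarrow> complex \<Rightarrow> bit \<Rightarrow> nat \<Rightarrow> (nat \<Rightarrow> spoly) \<Rightarrow> (nat \<Rightarrow> spoly)" where
  "Eop lam mu k p l u = SQ_act lam mu k p l ([:0,1:], 0) u"

definition Dop :: "complex \<Rightarrow> complex \<Rightarrow> complex \<Rightarrow> bit \<Rightarrow> nat \<Rightarrow> (nat \<Rightarrow> spoly) \<Rightarrow> (nat \<Rightarrow> spoly)" where
  "Dop lam mu k p l u = SQ_act lam mu k p l (1, 0) u"

definition Op :: "complex \<Rightarrow> complex \<Rightarrow> complex \<Rightarrow> bit \<Rightarrow> nat \<Rightarrow> complex \<Rightarrow> (nat \<Rightarrow> spoly) \<Rightarrow> (nat \<Rightarrow> spoly)" where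
  "Op lam mu k p l c u = (\<lambda>j. sp_scale (- c) (u j) + Eop lam mu k p l u j)"

lemma E_formula: "SQ_act lam mu k p l ([:0,1:],0) T = (\<lambda>j. if j < l then ev_diag [:0,1:] (mu - lam - k) j (T j) else 0)"
  by (rule act_formula) (simp add: pderiv_pCons)

lemma D_formula: "SQ_act lam mu k p l (1,0) T = (\<lambda>j. if j < l then ev_diag 1 (mu - lam - k) j (T j) else 0)"
  by (rule act_formula) (simp add: pderiv_pCons)

lemma coeff_X_pderiv: "coeff ([:0,1:] * pderiv a) n = of_nat n * coeff (a::complex poly) n"
proof -
  have "[:0,1:] * pderiv a = pCons 0 (pderiv a)" by simp
  then show ?thesis by (cases n) (auto simp: coeff_pderiv)
qed

lemma coeff_pCons_pderiv: "coeff (pCons 0 (pderiv a)) n = of_nat n * coeff (a::complex poly) n"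
  by (cases n) (auto simp: coeff_pderiv)

lemma cf_Eop:
  "cf (Eop lam mu k p l u) j e n = (if j < l then eig (mu - lam - k) j e n * cf u j e n else 0)"
  unfolding Eop_def E_formula
  by (auto simp: cf_def sel_def ev_diag_def eig_def coeff_X_pderiv coeff_pCons_pderiv pderiv_pCons algebra_simps)

lemma cf_Dop:
  "cf (Dop lam mu k p l u) j e n = (if j < l then of_nat (Suc n) * cf u j e (Suc n) else 0)"
  unfolding Dop_def D_formula
  by (auto simp: cf_def sel_def ev_diag_def coeff_pderiv algebra_simps)

lemma cf_Op:
  "cf (Op lam mu k p l c u) j e n = (if j < l then (eig (mu - lam - k) j e n - c) * cf u j e n else - c * cf u j e n)"
  using cf_Eop[of lam mu k p l u j e n]
  by (cases e) (auto simp: Op_def cf_def sel_def sp_scale_def algebra_simps)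


lemma act_carrier: "SQ_act lam mu k p l F u \<in> SQ_carrier l"
  by (simp add: SQ_act_def SQ_carrier_def)

lemma zero_carrier: "(\<lambda>_. 0) \<in> SQ_carrier l"
  by (simp add: SQ_carrier_def)

lemma sp_scale_0[simp]: "sp_scale c 0 = 0"
  by (simp add: sp_scale_def zero_prod_def)

lemma sp_scale_m1: "sp_scale (-1) x + x = 0"
  by (simp add: sp_scale_def prod_eq_iff)

lemma Op_carrier: "u \<in> SQ_carrier l \<Longrightarrow> Op lam mu k p l c u \<in> SQ_carrier l"
  using act_carrier[of lam mu k p l "([:0,1:],0)" u]
  by (simp add: Op_def Eop_def SQ_carrier_def)

context
  fixes lam mu k p l lam' mu' k' p' l' \<Phi>
  assumes EQ: "SQ_equivalence lam mu k p l lam' mu' k' p' l' \<Phi>"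
begin

lemma EQ_bij: "bij_betw \<Phi> (SQ_carrier l) (SQ_carrier l')"
  using EQ by (simp add: SQ_equivalence_def)

lemma EQ_lin: "u \<in> SQ_carrier l \<Longrightarrow> v \<in> SQ_carrier l \<Longrightarrow>
        \<Phi> (\<lambda>j. sp_scale c (u j) + v j) = (\<lambda>j. sp_scale c (\<Phi> u j) + \<Phi> v j)"
  using EQ unfolding SQ_equivalence_def by blast

lemma EQ_act: "u \<in> SQ_carrier l \<Longrightarrow> \<Phi> (SQ_act lam mu k p l F u) = SQ_act lam' mu' k' p' l' F (\<Phi> u)"
  using EQ unfolding SQ_equivalence_def by blast

lemma EQ_zero: "\<Phi> (\<lambda>_. 0) = (\<lambda>_. 0)"
proof -
  have "\<Phi> (\<lambda>j. sp_scale (-1) ((\<lambda>_. 0) j) + (\<lambda>_. 0) j) = (\<lambda>j. sp_scale (-1) (\<Phi> (\<lambda>_. 0) j) + \<Phi> (\<lambda>_. 0) j)"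
    by (rule EQ_lin[OF zero_carrier zero_carrier])
  then show ?thesis by (simp add: sp_scale_m1)
qed

lemma EQ_Op: "u \<in> SQ_carrier l \<Longrightarrow> \<Phi> (Op lam mu k p l c u) = Op lam' mu' k' p' l' c (\<Phi> u)"
  unfolding Op_def Eop_def
  by (simp add: EQ_lin act_carrier EQ_act)

lemma EQ_D: "u \<in> SQ_carrier l \<Longrightarrow> \<Phi> (Dop lam mu k p l u) = Dop lam' mu' k' p' l' (\<Phi> u)"
  unfolding Dop_def by (rule EQ_act)

lemma EQ_inv: "SQ_equivalence lam' mu' k' p' l' lam mu k p l (inv_into (SQ_carrier l) \<Phi>)"
proof -
  let ?C = "SQ_carrier l" and ?C' = "SQ_carrier l'" and ?\<Psi> = "inv_into (SQ_carrier l) \<Phi>"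
  have bij: "bij_betw ?\<Psi> ?C' ?C" by (rule bij_betw_inv_into[OF EQ_bij])
  have inC: "?\<Psi> v \<in> ?C" if "v \<in> ?C'" for v using bij that by (auto simp: bij_betw_def)
  have PP: "\<Phi> (?\<Psi> v) = v" if "v \<in> ?C'" for v
    using EQ_bij that by (simp add: bij_betw_inv_into_right)
  have PsiPhi: "?\<Psi> (\<Phi> u) = u" if "u \<in> ?C" for u
    using EQ_bij that by (simp add: bij_betw_def inv_into_f_f)
  have lincar: "(\<lambda>j. sp_scale c (u j) + v j) \<in> ?C" if "u \<in> ?C" "v \<in> ?C" for c u v
    using that by (simp add: SQ_carrier_def)
  have lin: "?\<Psi> (\<lambda>j. sp_scale c (u j) + v j) = (\<lambda>j. sp_scale c (?\<Psi> u j) + ?\<Psi> v j)"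
    if "u \<in> ?C'" "v \<in> ?C'" for c u v
  proof -
    have "\<Phi> (\<lambda>j. sp_scale c (?\<Psi> u j) + ?\<Psi> v j) = (\<lambda>j. sp_scale c (u j) + v j)"
      using EQ_lin[OF inC[OF that(1)] inC[OF that(2)], of c] PP that by simp
    then have "?\<Psi> (\<lambda>j. sp_scale c (u j) + v j) = ?\<Psi> (\<Phi> (\<lambda>j. sp_scale c (?\<Psi> u j) + ?\<Psi> v j))"
      by simp
    also have "\<dots> = (\<lambda>j. sp_scale c (?\<Psi> u j) + ?\<Psi> v j)"
      by (rule PsiPhi[OF lincar[OF inC[OF that(1)] inC[OF that(2)]]])
    finally show ?thesis .
  qed
  have act: "?\<Psi> (SQ_act lam' mu' k' p' l' F v) = SQ_act lam mu k p l F (?\<Psi> v)" if "v \<in> ?C'" for F v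
  proof -
    have "\<Phi> (SQ_act lam mu k p l F (?\<Psi> v)) = SQ_act lam' mu' k' p' l' F v"
      using EQ_act[OF inC[OF that]] PP[OF that] by simp
    then have "?\<Psi> (SQ_act lam' mu' k' p' l' F v) = ?\<Psi> (\<Phi> (SQ_act lam mu k p l F (?\<Psi> v)))" by simp
    also have "\<dots> = SQ_act lam mu k p l F (?\<Psi> v)" by (rule PsiPhi[OF act_carrier])
    finally show ?thesis .
  qed
  show ?thesis unfolding SQ_equivalence_def using bij lin act by blast
qed

end


section \<open>Spectral lemmas\<close>

lemma cf_zero[simp]: "cf (\<lambda>_. 0) j e n = 0"
  by (simp add: cf_def sel_def)

lemma carrier_out: "u \<in> SQ_carrier l \<Longrightarrow> \<not> j < l \<Longrightarrow> u j = 0"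
  by (simp add: SQ_carrier_def)

lemma nonzero_cf: assumes "G \<noteq> (0::spoly)" shows "\<exists>e n. coeff (sel e G) n \<noteq> 0"
proof -
  have "fst G \<noteq> 0 \<or> snd G \<noteq> 0" using assms by (simp add: prod_eq_iff)
  then show ?thesis
  proof
    assume "fst G \<noteq> 0"
    then obtain n where "coeff (fst G) n \<noteq> 0" by (metis leading_coeff_0_iff)
    then show ?thesis by (metis sel_def)
  next
    assume "snd G \<noteq> 0"
    then obtain n where "coeff (snd G) n \<noteq> 0" by (metis leading_coeff_0_iff)
    then show ?thesis by (metis sel_def)
  qed
qed

lemma spec_char:
  assumes "u \<in> SQ_carrier l" "u \<noteq> (\<lambda>_. 0)" "Dop lam mu k p l u = (\<lambda>_. 0)"
    "Op lam mu k p l c u = (\<lambda>_. 0)"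
  shows "\<exists>m \<le> l. c = (mu - lam - k) + of_nat m / 2"
proof -
  obtain j where j: "u j \<noteq> 0" using assms(2) by auto
  then have jl: "j < l" using carrier_out[OF assms(1)] by blast
  obtain e n where nz: "cf u j e n \<noteq> 0" using nonzero_cf[OF j] by (auto simp: cf_def)
  have n0: "n = 0"
  proof (rule ccontr)
    assume "n \<noteq> 0"
    then obtain n' where n': "n = Suc n'" by (cases n) auto
    have "cf (Dop lam mu k p l u) j e n' = of_nat (Suc n') * cf u j e n" using jl n' by (simp add: cf_Dop)
    then have "of_nat (Suc n') * cf u j e n = 0" using assms(3) by simp
    moreover have "(of_nat (Suc n') :: complex) \<noteq> 0" by (simp only: of_nat_eq_0_iff)
    ultimately show False using nz by simp
  qed
  have "cf (Op lam mu k p l c u) j e n = 0" using assms(4) by simp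
  then have "eig (mu - lam - k) j e n = c" using nz jl by (simp add: cf_Op)
  then have "c = (mu - lam - k) + of_nat (j + of_bool e) / 2" using n0 by (simp add: eig_def)
  moreover have "j + of_bool e \<le> l" using jl by (cases e) auto
  ultimately show ?thesis by blast
qed

lemma spec_ex:
  assumes "m \<le> l" "0 < l"
  shows "\<exists>u \<in> SQ_carrier l. u \<noteq> (\<lambda>_. 0) \<and> Dop lam mu k p l u = (\<lambda>_. 0) \<and>
           Op lam mu k p l (mu - lam - k + of_nat m / 2) u = (\<lambda>_. 0)"
proof (cases "m < l")
  case True
  let ?u = "\<lambda>i. if i = m then (1::complex poly, 0::complex poly) else 0"
  have "?u \<in> SQ_carrier l" using True by (simp add: SQ_carrier_def)
  moreover have "?u \<noteq> (\<lambda>_. 0)" by (metis (mono_tags, lifting) fst_zero one_neq_zero fst_conv)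
  moreover have "Dop lam mu k p l ?u = (\<lambda>_. 0)"
    by (auto simp: Dop_def D_formula ev_diag_def zero_prod_def)
  moreover have "Op lam mu k p l (mu - lam - k + of_nat m / 2) ?u = (\<lambda>_. 0)"
    by (auto simp: Op_def Eop_def E_formula ev_diag_def zero_prod_def sp_scale_def pderiv_pCons True)
  ultimately show ?thesis by blast
next
  case False
  then have ml: "m = l" using assms by simp
  let ?u = "\<lambda>i. if i = l - 1 then (0::complex poly, 1::complex poly) else 0"
  have "?u \<in> SQ_carrier l" using assms by (auto simp: SQ_carrier_def)
  moreover have "?u \<noteq> (\<lambda>_. 0)" by (metis (mono_tags, lifting) snd_zero one_neq_zero snd_conv)
  moreover have "Dop lam mu k p l ?u = (\<lambda>_. 0)"
    by (auto simp: Dop_def D_formula ev_diag_def zero_prod_def)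
  moreover have "Op lam mu k p l (mu - lam - k + of_nat m / 2) ?u = (\<lambda>_. 0)"
  proof -
    have "of_nat (l - 1) + 1 = (of_nat l :: complex)" using assms(2) by (simp add: of_nat_diff)
    then show ?thesis
      using assms(2) by (auto simp: Op_def Eop_def E_formula ev_diag_def zero_prod_def sp_scale_def pderiv_pCons ml)
  qed
  ultimately show ?thesis by blast
qed

lemma spec_transfer:
  assumes EQ: "SQ_equivalence lam mu k p l lam' mu' k' p' l' \<Phi>"
    and "m \<le> l" "0 < l"
  shows "\<exists>m' \<le> l'. mu - lam - k + of_nat m / 2 = mu' - lam' - k' + of_nat m' / 2"
proof -
  obtain u where u: "u \<in> SQ_carrier l" "u \<noteq> (\<lambda>_. 0)" "Dop lam mu k p l u = (\<lambda>_. 0)"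
      "Op lam mu k p l (mu - lam - k + of_nat m / 2) u = (\<lambda>_. 0)"
    using spec_ex[OF assms(2,3)] by blast
  have v1: "\<Phi> u \<in> SQ_carrier l'" using EQ_bij[OF EQ] u(1) by (auto simp: bij_betw_def)
  have v2: "\<Phi> u \<noteq> (\<lambda>_. 0)"
  proof
    assume "\<Phi> u = (\<lambda>_. 0)"
    then have "\<Phi> u = \<Phi> (\<lambda>_. 0)" using EQ_zero[OF EQ] by simp
    then have "u = (\<lambda>_. 0)" using EQ_bij[OF EQ] u(1) zero_carrier
      by (auto simp: bij_betw_def inj_on_def)
    then show False using u(2) by simp
  qed
  have v3: "Dop lam' mu' k' p' l' (\<Phi> u) = (\<lambda>_. 0)"
    using EQ_D[OF EQ u(1)] u(3) EQ_zero[OF EQ] by simp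
  have v4: "Op lam' mu' k' p' l' (mu - lam - k + of_nat m / 2) (\<Phi> u) = (\<lambda>_. 0)"
  proof -
    have "Op lam' mu' k' p' l' (mu - lam - k + of_nat m / 2) (\<Phi> u) = \<Phi> (Op lam mu k p l (mu - lam - k + of_nat m / 2) u)"
      using EQ_Op[OF EQ u(1)] by simp
    also have "\<dots> = \<Phi> (\<lambda>_. 0)" using u(4) by simp
    finally show ?thesis using EQ_zero[OF EQ] by simp
  qed
  show ?thesis using spec_char[OF v1 v2 v3 v4] by auto
qed


section \<open>Iterated operators and parity\<close>

definition Iter :: "complex \<Rightarrow> complex \<Rightarrow> complex \<Rightarrow> bit \<Rightarrow> nat \<Rightarrow> complex list \<Rightarrow> (nat \<Rightarrow> spoly) \<Rightarrow> (nat \<Rightarrow> spoly)" where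
  "Iter lam mu k p l cs u = foldr (Op lam mu k p l) cs u"

lemma Iter_carrier: "u \<in> SQ_carrier l \<Longrightarrow> Iter lam mu k p l cs u \<in> SQ_carrier l"
  by (induction cs) (auto simp: Iter_def Op_carrier)

lemma cf_Iter: "j < l \<Longrightarrow>
   cf (Iter lam mu k p l cs u) j e n = (\<Prod>c\<leftarrow>cs. (eig (mu - lam - k) j e n - c)) * cf u j e n"
  by (induction cs) (auto simp: Iter_def cf_Op)

lemma EQ_Iter:
  assumes EQ: "SQ_equivalence lam mu k p l lam' mu' k' p' l' \<Phi>" and u: "u \<in> SQ_carrier l"
  shows "\<Phi> (Iter lam mu k p l cs u) = Iter lam' mu' k' p' l' cs (\<Phi> u)"
proof (induction cs)
  case Nil then show ?case by (simp add: Iter_def)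
next
  case (Cons c cs)
  have "\<Phi> (Iter lam mu k p l (c # cs) u) = \<Phi> (Op lam mu k p l c (Iter lam mu k p l cs u))"
    by (simp add: Iter_def)
  also have "\<dots> = Op lam' mu' k' p' l' c (\<Phi> (Iter lam mu k p l cs u))"
    by (rule EQ_Op[OF EQ Iter_carrier[OF u]])
  also have "\<dots> = Iter lam' mu' k' p' l' (c # cs) (\<Phi> u)" using Cons by (simp add: Iter_def)
  finally show ?case .
qed

definition Cls :: "bool \<Rightarrow> (nat \<Rightarrow> spoly) \<Rightarrow> bool" where
  "Cls bb u \<longleftrightarrow> (\<forall>j e n. cf u j e n \<noteq> 0 \<longrightarrow> even (j + of_bool e) = bb)"

lemma spoly_cf_ext: "(\<And>e n. coeff (sel e G) n = coeff (sel e H) n) \<Longrightarrow> G = H"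
  by (metis poly_eq_iff prod_eq_iff sel_def)

lemma eig_eq_parity:
  assumes "eig nu j' e' n' = eig nu j e n"
  shows "even (j' + of_bool e') = even (j + of_bool e)"
proof -
  have "Re (2 * eig nu j' e' n') = Re (2 * eig nu j e n)" using assms by simp
  then have h: "real j' + of_bool e' + 2 * real n' = real j + of_bool e + 2 * real n"
    by (cases e; cases e') (auto simp: eig_def algebra_simps field_simps)
  have "(real (j' + of_bool e' + 2 * n')) = real (j + of_bool e + 2 * n)"
    using h by simp
  then have "j' + of_bool e' + 2 * n' = j + of_bool e + 2 * n" by (simp only: of_nat_eq_iff)
  then have "even (j' + of_bool e' + 2 * n') = even (j + of_bool e + 2 * n)" by simp
  then show ?thesis by simp
qed

lemma set_cs: "set (map (\<lambda>(j,e,n). f j e n) (filter (\<lambda>(j,e,n). P j e)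
      (List.product [0..<l] (List.product [False,True] [0..<Suc N])))) =
   {f j e n | j e n. j < l \<and> P j e \<and> n \<le> N}"
proof
  show "set (map (\<lambda>(j,e,n). f j e n) (filter (\<lambda>(j,e,n). P j e)
      (List.product [0..<l] (List.product [False,True] [0..<Suc N])))) \<subseteq>
    {f j e n | j e n. j < l \<and> P j e \<and> n \<le> N}"
  proof
    fix c assume "c \<in> set (map (\<lambda>(j,e,n). f j e n) (filter (\<lambda>(j,e,n). P j e)
      (List.product [0..<l] (List.product [False,True] [0..<Suc N]))))"
    then obtain t where t0: "t \<in> set (filter (\<lambda>(j,e,n). P j e)
      (List.product [0..<l] (List.product [False,True] [0..<Suc N])))" "c = (\<lambda>(j,e,n). f j e n) t"
      unfolding set_map image_iff by blast
    obtain j e n where tt: "t = (j,e,n)" by (cases t) blast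
    have t: "(j,e,n) \<in> set (filter (\<lambda>(j,e,n). P j e)
      (List.product [0..<l] (List.product [False,True] [0..<Suc N])))" "c = f j e n"
      using t0 tt by simp_all
    from t(1) have "j < l" "P j e" "n \<le> N" by auto
    then show "c \<in> {f j e n | j e n. j < l \<and> P j e \<and> n \<le> N}" using t(2) by blast
  qed
next
  show "{f j e n | j e n. j < l \<and> P j e \<and> n \<le> N} \<subseteq> set (map (\<lambda>(j,e,n). f j e n) (filter (\<lambda>(j,e,n). P j e)
      (List.product [0..<l] (List.product [False,True] [0..<Suc N]))))"
  proof
    fix c assume "c \<in> {f j e n | j e n. j < l \<and> P j e \<and> n \<le> N}"
    then obtain j e n where c: "c = f j e n" "j < l" "P j e" "n \<le> N" by blast
    have m: "(j,e,n) \<in> set (filter (\<lambda>(j,e,n). P j e)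
      (List.product [0..<l] (List.product [False,True] [0..<Suc N])))"
      using c(2,3,4) by (cases e) (simp_all del: upt_Suc add: less_Suc_eq_le)
    have "f j e n \<in> (\<lambda>(j,e,n). f j e n) ` set (filter (\<lambda>(j,e,n). P j e)
      (List.product [0..<l] (List.product [False,True] [0..<Suc N])))"
      using imageI[OF m, of "\<lambda>(j,e,n). f j e n"] by (simp only: prod.case)
    then show "c \<in> set (map (\<lambda>(j,e,n). f j e n) (filter (\<lambda>(j,e,n). P j e)
      (List.product [0..<l] (List.product [False,True] [0..<Suc N]))))"
      by (simp only: set_map c(1))
  qed
qed

lemma Cls_transfer:
  assumes EQ: "SQ_equivalence lam mu k p l lam' mu' k' p' l' \<Phi>"
    and nu: "mu - lam - k = mu' - lam' - k'"
    and u: "u \<in> SQ_carrier l" and C: "Cls bb u"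
  shows "Cls bb (\<Phi> u)"
proof -
  define nu where "nu = mu - lam - k"
  define N where "N = (\<Sum>j<l. degree (fst (u j)) + degree (snd (u j)))"
  define cs where "cs = map (\<lambda>(j,e,n). eig nu j e n) (filter (\<lambda>(j,e,n). even (j + of_bool e) = bb)
      (List.product [0..<l] (List.product [False,True] [0..<Suc N])))"
  have mem: "eig nu j e n \<in> set cs" if "j < l" "n \<le> N" "even (j + of_bool e) = bb" for j e n
    using that unfolding cs_def set_cs[of "\<lambda>j e n. eig nu j e n" "\<lambda>j e. even (j + of_bool e) = bb"] by blast
  have memD: "\<exists>j e n. c = eig nu j e n \<and> even (j + of_bool e) = bb" if "c \<in> set cs" for c
    using that unfolding cs_def set_cs[of "\<lambda>j e n. eig nu j e n" "\<lambda>j e. even (j + of_bool e) = bb"] by blast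
  have I0: "Iter lam mu k p l cs u = (\<lambda>_. 0)"
  proof
    fix j
    show "Iter lam mu k p l cs u j = 0"
    proof (cases "j < l")
      case False then show ?thesis using carrier_out[OF Iter_carrier[OF u]] by blast
    next
      case True
      show ?thesis
      proof (rule spoly_cf_ext)
        fix e n
        have "cf (Iter lam mu k p l cs u) j e n = 0"
        proof (cases "cf u j e n = 0")
          case True then show ?thesis using \<open>j < l\<close> by (simp add: cf_Iter)
        next
          case False
          then have par: "even (j + of_bool e) = bb" using C unfolding Cls_def by blast
          have "n \<le> degree (sel e (u j))" using False by (simp add: cf_def le_degree)
          also have "\<dots> \<le> degree (fst (u j)) + degree (snd (u j))" by (simp add: sel_def)
          also have "\<dots> \<le> N" unfolding N_def
            by (rule member_le_sum[where f = "\<lambda>j. degree (fst (u j)) + degree (snd (u j))"]) (use \<open>j < l\<close> in auto)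
          finally have "eig nu j e n \<in> set cs" using mem \<open>j < l\<close> par by blast
          then have "(\<Prod>c\<leftarrow>cs. (eig nu j e n - c)) = 0"
            by (auto simp: prod_list_zero_iff)
          then show ?thesis using \<open>j < l\<close> by (simp add: cf_Iter nu_def)
        qed
        then show "coeff (sel e (Iter lam mu k p l cs u j)) n = coeff (sel e 0) n"
          by (simp add: cf_def sel_def)
      qed
    qed
  qed
  have I1: "Iter lam' mu' k' p' l' cs (\<Phi> u) = (\<lambda>_. 0)"
    using EQ_Iter[OF EQ u, of cs] I0 EQ_zero[OF EQ] by simp
  have Pu: "\<Phi> u \<in> SQ_carrier l'" using EQ_bij[OF EQ] u by (auto simp: bij_betw_def)
  show ?thesis unfolding Cls_def
  proof (intro allI impI)
    fix j e n assume nz: "cf (\<Phi> u) j e n \<noteq> 0"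
    have jl: "j < l'"
    proof (rule ccontr)
      assume "\<not> j < l'"
      then have "\<Phi> u j = 0" using carrier_out[OF Pu] by blast
      then have "cf (\<Phi> u) j e n = 0" by (simp add: cf_def sel_def)
      then show False using nz by simp
    qed
    have "cf (Iter lam' mu' k' p' l' cs (\<Phi> u)) j e n = 0" using I1 by simp
    then have "(\<Prod>c\<leftarrow>cs. (eig nu j e n - c)) = 0" using nz jl nu by (simp add: cf_Iter nu_def)
    then obtain c where c: "c \<in> set cs" "eig nu j e n = c" by (auto simp: prod_list_zero_iff)
    then obtain j2 e2 n2 where "c = eig nu j2 e2 n2" "even (j2 + of_bool e2) = bb" using memD by blast
    then show "even (j + of_bool e) = bb" using eig_eq_parity c(2) by metis
  qed
qed

lemma bit_cases2: "(b::bit) = 0 \<or> b = 1" by (cases b) auto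

lemma even_iff_Cls: "SQ_is_even p u \<longleftrightarrow> Cls (p = 0) u"
proof -
  have A: "SQ_is_even p u \<longleftrightarrow> (\<forall>j. if (p = 0) = even j then snd (u j) = 0 else fst (u j) = 0)"
    unfolding SQ_is_even_def SQ_odd_part_def
    using bit_cases2[of p]
    by (auto simp: fun_eq_iff sp_even_part_def sp_odd_part_def of_nat_bit zero_prod_def split: if_splits)
  have B: "Cls (p = 0) u \<longleftrightarrow> (\<forall>j. if (p = 0) = even j then snd (u j) = 0 else fst (u j) = 0)"
    unfolding Cls_def cf_def sel_def
    by (auto simp: poly_eq_iff split: if_splits)
  show ?thesis using A B by simp
qed

lemma odd_iff_Cls: "SQ_is_odd p u \<longleftrightarrow> Cls (p \<noteq> 0) u"
proof -
  have A: "SQ_is_odd p u \<longleftrightarrow> (\<forall>j. if (p = 0) = even j then fst (u j) = 0 else snd (u j) = 0)"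
    unfolding SQ_is_odd_def SQ_even_part_def
    using bit_cases2[of p]
    by (auto simp: fun_eq_iff sp_even_part_def sp_odd_part_def of_nat_bit zero_prod_def split: if_splits)
  have B: "Cls (p \<noteq> 0) u \<longleftrightarrow> (\<forall>j. if (p = 0) = even j then fst (u j) = 0 else snd (u j) = 0)"
    unfolding Cls_def cf_def sel_def
    by (auto simp: poly_eq_iff split: if_splits) (metis (full_types))+
  show ?thesis using A B by simp
qed


theorem lemma2p3:
  fixes lam mu lam' mu' k k' :: complex and p p' :: bit and l l' :: nat
    and \<Phi> :: "(nat \<Rightarrow> spoly) \<Rightarrow> (nat \<Rightarrow> spoly)"
  assumes "l > 0" and "l' > 0"
    and "SQ_equivalence lam mu k p l lam' mu' k' p' l' \<Phi>"
  shows "l = l' \<and> (mu - lam) - k = (mu' - lam') - k' \<and>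
         (p = p' \<longrightarrow> SQ_map_even p l p' \<Phi>) \<and>
         (p \<noteq> p' \<longrightarrow> SQ_map_odd p l p' \<Phi>)"
proof -
  note EQ = assms(3)
  note EQ' = EQ_inv[OF EQ]
  obtain m1 where m1: "m1 \<le> l'" "mu - lam - k + of_nat 0 / 2 = mu' - lam' - k' + of_nat m1 / 2"
    using spec_transfer[OF EQ _ assms(1), of 0] by auto
  obtain m2 where m2: "m2 \<le> l" "mu' - lam' - k' + of_nat 0 / 2 = mu - lam - k + of_nat m2 / 2"
    using spec_transfer[OF EQ' _ assms(2), of 0] by auto
  have "(of_nat (m1 + m2) :: complex) = 0" using m1(2) m2(2)
    by (simp add: field_simps)
  then have "m1 + m2 = 0" by (simp only: of_nat_eq_0_iff)
  then have "m1 = 0" by simp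
  then have nu: "mu - lam - k = mu' - lam' - k'" using m1(2) by simp
  obtain m3 where m3: "m3 \<le> l'" "mu - lam - k + of_nat l / 2 = mu' - lam' - k' + of_nat m3 / 2"
    using spec_transfer[OF EQ _ assms(1), of l] by auto
  obtain m4 where m4: "m4 \<le> l" "mu' - lam' - k' + of_nat l' / 2 = mu - lam - k + of_nat m4 / 2"
    using spec_transfer[OF EQ' _ assms(2), of l'] by auto
  have "l = m3" using m3(2) nu by simp
  moreover have "l' = m4" using m4(2) nu by simp
  ultimately have ll: "l = l'" using m3(1) m4(1) by simp
  have Pu: "\<Phi> u \<in> SQ_carrier l'" if "u \<in> SQ_carrier l" for u
    using EQ_bij[OF EQ] that by (auto simp: bij_betw_def)
  have T: "Cls bb (\<Phi> u)" if "u \<in> SQ_carrier l" "Cls bb u" for bb u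
    by (rule Cls_transfer[OF EQ nu that])
  have pp: "p \<noteq> p' \<Longrightarrow> (p' = 0) = (p \<noteq> 0)" using bit_cases2[of p] bit_cases2[of p'] by auto
  have "p = p' \<longrightarrow> SQ_map_even p l p' \<Phi>"
    unfolding SQ_map_even_def even_iff_Cls odd_iff_Cls using T by auto
  moreover have "p \<noteq> p' \<longrightarrow> SQ_map_odd p l p' \<Phi>"
  proof
    assume "p \<noteq> p'"
    then have e: "(p' = 0) = (p \<noteq> 0)" "(p' \<noteq> 0) = (p = 0)" using pp by auto
    show "SQ_map_odd p l p' \<Phi>"
      unfolding SQ_map_odd_def even_iff_Cls odd_iff_Cls e using T by auto
  qed
  ultimately show ?thesis using ll nu by simp
qed

end
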